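(* Let $\omega_p\in[0,\pi]$ and $\theta_p\in\mathbb{R}$. (I) If $\omega_p\in(0,\pi)$, then $\sup_{f\in\mathbb{AP}_{\omega_p,\theta_p}}\theta_f'(\omega_p)=-\left|\frac{\sin\theta_p}{\sin\omega_p}\right|$. (II) If $\omega_p\in\{0,\pi\}$ and $\theta_p\in\{0,\pi\}$ (mod $2\pi$), then $\sup_{f\in\mathbb{AP}_{\omega_p,\theta_p}}\theta_f'(\omega_p)=0$. When the supremum is zero it is attained by $f(z)=1$ or $f(z)=-1$; when it is nonzero it is attained by a first-order all-pass function $f(z)=\pm\frac{az+1}{z+a}$ with a suitable sign and $|a|<1$ chosen so that $\theta_f(\omega_p)=\theta_p$ (mod $2\pi$).
   Context: $\mathbb{D}$ is the open unit disk. $\mathcal{RH}_\infty$: proper real-rational functions with all poles in $\mathbb{D}$, with $\|f\|_{H_\infty}=\sup_{\omega\in(-\pi,\pi]}|f(e^{j\omega})|$. $\theta_f(\omega):=\angle f(e^{j\omega})$ is a continuous choice of argument and $\theta_f'$ its derivative in $\omega$. $\mathbb{RF}_{\omega_p,\theta_p}:=\{f\in\mathcal{RH}_\infty:\ \|f\|_{H_\infty}=|f(e^{j\omega_p})|=1,\ \theta_f(\omega_p)=\theta_p\ (\mathrm{mod}\ 2\pi)\}$. $\mathbb{AP}$ is the set of stable real-rational all-pass functions with unit gain, i.e. $f\in\mathcal{RH}_\infty$ with $|f(e^{j\omega})|=1$ for all $\omega$; $\mathbb{AP}_{\omega_p,\theta_p}:=\mathbb{AP}\cap\mathbb{RF}_{\omega_p,\theta_p}$.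 *)

theory Defs
  imports "HOL-Analysis.Analysis" "HOL-Computational_Algebra.Polynomial"
begin

definition RHinf :: "(complex \<Rightarrow> complex) set" where
  "RHinf = {f. \<exists>p q :: real poly. q \<noteq> 0 \<and> degree p \<le> degree q \<and>
      (\<forall>z. poly (map_poly complex_of_real q) z = 0 \<longrightarrow> norm z < 1) \<and>
      (\<forall>z. poly (map_poly complex_of_real q) z \<noteq> 0 \<longrightarrow>
           f z = poly (map_poly complex_of_real p) z / poly (map_poly complex_of_real q) z)}"

definition hinf_norm :: "(complex \<Rightarrow> complex) \<Rightarrow> real" where
  "hinf_norm f = (SUP \<omega>\<in>{-pi<..pi}. norm (f (cis \<omega>)))"

definition phase :: "(complex \<Rightarrow> complex) \<Rightarrow> real \<Rightarrow> real" where
  "phase f = (SOME \<theta>. continuous_on UNIV \<theta> \<and>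
       (\<forall>\<omega>. f (cis \<omega>) = complex_of_real (norm (f (cis \<omega>))) * cis (\<theta> \<omega>)))"

definition phase_deriv :: "(complex \<Rightarrow> complex) \<Rightarrow> real \<Rightarrow> real" where
  "phase_deriv f \<omega> = deriv (phase f) \<omega>"

definition RF :: "real \<Rightarrow> real \<Rightarrow> (complex \<Rightarrow> complex) set" where
  "RF \<omega>p \<theta>p = {f \<in> RHinf. hinf_norm f = norm (f (cis \<omega>p)) \<and> norm (f (cis \<omega>p)) = 1 \<and>
      (\<exists>k::int. phase f \<omega>p = \<theta>p + 2 * pi * of_int k)}"

definition AP :: "(complex \<Rightarrow> complex) set" where
  "AP = {f \<in> RHinf. \<forall>\<omega>. norm (f (cis \<omega>)) = 1}"

definition AP_at :: "real \<Rightarrow> real \<Rightarrow> (complex \<Rightarrow> complex) set" where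
  "AP_at \<omega>p \<theta>p = AP \<inter> RF \<omega>p \<theta>p"

end

theory Submission
  imports Defs "HOL-Complex_Analysis.Complex_Analysis" "HOL-Library.Real_Mod"
begin

lemma moeb_den_nz:
  fixes w z :: complex
  assumes "norm w < 1" "norm z \<le> 1"
  shows "1 - cnj w * z \<noteq> 0"
proof
  assume "1 - cnj w * z = 0"
  then have "cnj w * z = 1" by simp
  then have "norm w * norm z = 1" by (metis complex_mod_cnj norm_mult norm_one)
  moreover have "norm w * norm z < 1"
    using assms by (metis less_le_trans mult_le_one mult_left_le norm_ge_zero not_le order.strict_implies_order mult_less_le_imp_less zero_less_one mult_strict_right_mono le_less)
  ultimately show False by simp
qed

lemma moeb_id:
  fixes w z :: complex
  assumes "norm w < 1" "norm z < 1"
  shows "1 - (norm ((z - w) / (1 - cnj w * z)))\<^sup>2 =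
     (1 - (norm w)\<^sup>2) * (1 - (norm z)\<^sup>2) / (norm (1 - cnj w * z))\<^sup>2"
proof -
  have nz: "1 - cnj w * z \<noteq> 0" using moeb_den_nz assms by auto
  have "(norm (1 - cnj w * z))\<^sup>2 - (norm (z - w))\<^sup>2 = (1 - (norm w)\<^sup>2) * (1 - (norm z)\<^sup>2)"
    unfolding cmod_power2 by (simp add: algebra_simps power2_eq_square)
  then show ?thesis using nz
    by (simp add: norm_divide power_divide field_simps)
qed

lemma pick2:
  fixes G :: "complex \<Rightarrow> complex"
  assumes hol: "G holomorphic_on ball 0 1"
    and le: "\<And>z. norm z < 1 \<Longrightarrow> norm (G z) \<le> 1"
    and w1: "norm w1 < 1" and w2: "norm w2 < 1"
  shows "(norm (1 - cnj (G w1) * G w2))\<^sup>2 * ((1 - (norm w1)\<^sup>2) * (1 - (norm w2)\<^sup>2))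
     \<le> (norm (1 - cnj w1 * w2))\<^sup>2 * ((1 - (norm (G w1))\<^sup>2) * (1 - (norm (G w2))\<^sup>2))"
proof (cases "\<exists>z. norm z < 1 \<and> norm (G z) = 1")
  case True
  then obtain z where z: "norm z < 1" "norm (G z) = 1" by blast
  have "G constant_on ball 0 1"
    by (rule maximum_modulus_principle[OF hol _ _ open_ball subset_refl, of z])
       (use z le in auto)
  then obtain c where c: "\<And>x. x \<in> ball 0 1 \<Longrightarrow> G x = c" unfolding constant_on_def by blast
  have "norm c = 1" using c z by force
  have e1: "G w1 = c" "G w2 = c" using c w1 w2 by auto
  have "1 - cnj c * c = 0"
    using \<open>norm c = 1\<close> by (metis complex_norm_square mult.commute of_real_1 power_one right_minus_eq)
  then show ?thesis using e1 \<open>norm c = 1\<close> by simp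
next
  case False
  then have lt: "\<And>z. norm z < 1 \<Longrightarrow> norm (G z) < 1" using le by (meson le_less)
  define M where "M = (\<lambda>a z. Moebius_function 0 a z)"
  define b where "b = G w1"
  have b1: "norm b < 1" using lt w1 b_def by auto
  define h where "h = (\<lambda>z. M b (G (M (-w1) z)))"
  have m1: "M (-w1) ` ball 0 1 \<subseteq> ball 0 1"
    using Moebius_function_norm_lt_1 w1 by (auto simp: M_def)
  have Gb: "G ` ball 0 1 \<subseteq> ball 0 1" using lt by auto
  have holh: "h holomorphic_on ball 0 1"
  proof -
    have "(G \<circ> M (-w1)) holomorphic_on ball 0 1"
      by (rule holomorphic_on_compose_gen[OF _ hol m1])
         (use Moebius_function_holomorphic w1 in \<open>auto simp: M_def\<close>)
    moreover have "(G \<circ> M (-w1)) ` ball 0 1 \<subseteq> ball 0 1" using m1 Gb by auto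
    moreover have "M b holomorphic_on ball 0 1"
      using Moebius_function_holomorphic b1 by (auto simp: M_def)
    ultimately have "(M b \<circ> (G \<circ> M (-w1))) holomorphic_on ball 0 1"
      using holomorphic_on_compose_gen by blast
    then show ?thesis by (simp add: h_def o_def)
  qed
  have h0: "h 0 = 0"
    by (simp add: h_def M_def Moebius_function_of_zero b_def Moebius_function_eq_zero)
  have hlt: "\<And>z. norm z < 1 \<Longrightarrow> norm (h z) < 1"
    unfolding h_def M_def
    by (metis Moebius_function_norm_lt_1 b1 lt norm_minus_cancel w1)
  define \<xi> where "\<xi> = M w1 w2"
  have \<xi>1: "norm \<xi> < 1" using Moebius_function_norm_lt_1 w1 w2 by (simp add: \<xi>_def M_def)
  have "norm (h \<xi>) \<le> norm \<xi>"
    by (rule Schwarz_Lemma(1)[OF holh h0 hlt \<xi>1])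
  moreover have "h \<xi> = M b (G w2)"
    unfolding h_def \<xi>_def M_def
    using Moebius_function_compose[of "-w1" w1 w2] w1 w2 by simp
  ultimately have ineq: "norm (M b (G w2)) \<le> norm (M w1 w2)" by (simp add: \<xi>_def)
  have g2: "norm (G w2) < 1" using lt w2 by auto
  have "1 - (norm (M w1 w2))\<^sup>2 \<le> 1 - (norm (M b (G w2)))\<^sup>2"
    using ineq by (simp add: power_mono)
  then have I: "(1 - (norm w1)\<^sup>2) * (1 - (norm w2)\<^sup>2) / (norm (1 - cnj w1 * w2))\<^sup>2
      \<le> (1 - (norm b)\<^sup>2) * (1 - (norm (G w2))\<^sup>2) / (norm (1 - cnj b * G w2))\<^sup>2"
    unfolding M_def Moebius_function_simple
    using moeb_id[OF w1 w2] moeb_id[OF b1 g2] by simp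
  have d1: "(norm (1 - cnj w1 * w2))\<^sup>2 > 0" using moeb_den_nz[of w1 w2] w1 w2 by simp
  have d2: "(norm (1 - cnj b * G w2))\<^sup>2 > 0" using moeb_den_nz[of b "G w2"] b1 g2 by simp
  from I d1 d2 show ?thesis
    unfolding b_def[symmetric] by (simp add: divide_le_eq le_divide_eq mult_ac)
qed

lemma sqrt_ineq_aux:
  fixes A B C D :: real
  assumes "A\<^sup>2 * B\<^sup>2 \<le> C\<^sup>2 * D\<^sup>2" "A \<ge> 0" "B \<ge> 0" "C \<ge> 0" "D \<ge> 0"
  shows "A * B \<le> C * D"
proof -
  have "(A * B)\<^sup>2 \<le> (C * D)\<^sup>2" using assms(1) by (simp add: power_mult_distrib)
  then show ?thesis using assms by (meson mult_nonneg_nonneg power2_le_imp_le)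
qed

lemma boundary_bound:
  fixes G :: "complex \<Rightarrow> complex"
  assumes S: "open S" "cball 0 1 \<subseteq> S" and hol: "G holomorphic_on S"
    and unit: "\<And>z. norm z = 1 \<Longrightarrow> norm (G z) = 1"
    and sym: "\<And>z. z \<in> cball 0 1 \<Longrightarrow> z \<noteq> 0 \<Longrightarrow> G (cnj z) = cnj (G z)"
    and eta: "norm \<eta> = 1"
  shows "norm (1 - (cnj (G \<eta>))\<^sup>2) / norm (1 - (cnj \<eta>)\<^sup>2) \<le> Re (cnj (G \<eta>) * deriv G \<eta> * \<eta>)"
proof -
  have le: "norm (G z) \<le> 1" if "norm z < 1" for z
  proof (rule maximum_modulus_frontier[of G "cball 0 1"])
    show "G holomorphic_on interior (cball 0 1)"
      using hol S ball_subset_cball holomorphic_on_subset by (metis interior_cball order_trans)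
    show "continuous_on (closure (cball 0 1)) G"
      using hol S by (auto intro: holomorphic_on_imp_continuous_on holomorphic_on_subset)
  qed (use that unit in \<open>auto simp: frontier_cball\<close>)
  have holb: "G holomorphic_on ball 0 1" using hol S ball_subset_cball holomorphic_on_subset by (metis order_trans)
  have "\<eta> \<noteq> 0" using eta by auto
  define g where "g = (\<lambda>s::real. G (of_real s * \<eta>))"
  define c where "c = G \<eta>"
  define L where "L = (\<lambda>s::real. norm (1 - (cnj (g s))\<^sup>2) / norm (1 - (of_real s)\<^sup>2 * (cnj \<eta>)\<^sup>2))"
  define R where "R = (\<lambda>s::real. (1 - (norm (g s))\<^sup>2) / (1 - s\<^sup>2))"
  have LR: "L s \<le> R s" if s: "0 < s" "s < 1" for s
  proof -
    have n1: "norm (of_real s * \<eta>) < 1" using s eta by (simp add: norm_mult)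
    have n2: "norm (of_real s * cnj \<eta>) < 1" using s eta by (simp add: norm_mult)
    have gs: "G (of_real s * cnj \<eta>) = cnj (g s)"
      using sym[of "of_real s * \<eta>"] n1 s eta \<open>\<eta> \<noteq> 0\<close> by (auto simp: g_def)
    note P = pick2[OF holb le n1 n2]
    have ng: "norm (g s) \<le> 1" using le n1 by (simp add: g_def)
    have e: "cnj (of_real s * \<eta>) * (of_real s * cnj \<eta>) = (of_real s)\<^sup>2 * (cnj \<eta>)\<^sup>2"
      by (simp add: power2_eq_square)
    have P2: "(norm (1 - (cnj (g s))\<^sup>2))\<^sup>2 * (1 - s\<^sup>2)\<^sup>2
        \<le> (norm (1 - (of_real s)\<^sup>2 * (cnj \<eta>)\<^sup>2))\<^sup>2 * (1 - (norm (g s))\<^sup>2)\<^sup>2"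
    proof -
      have gs': "G (of_real s * \<eta>) = g s" by (simp add: g_def)
      have n1': "norm (of_real s * \<eta>) = s" "norm (of_real s * cnj \<eta>) = s" using eta s by (auto simp: norm_mult)
      have e2: "cnj (g s) * cnj (g s) = (cnj (g s))\<^sup>2" by (simp add: power2_eq_square)
      show ?thesis using P[unfolded gs gs' e n1' e2 complex_mod_cnj]
        by (simp add: power2_eq_square mult_ac)
    qed
    have A: "norm (1 - (cnj (g s))\<^sup>2) * (1 - s\<^sup>2)
        \<le> norm (1 - (of_real s)\<^sup>2 * (cnj \<eta>)\<^sup>2) * (1 - (norm (g s))\<^sup>2)"
      apply (rule sqrt_ineq_aux[OF P2])
      using s ng by (auto simp: power_le_one abs_square_le_1)
    have pos1: "1 - s\<^sup>2 > 0" using s by (simp add: power_less_one_iff abs_square_less_1)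
    have pos2: "norm (1 - (of_real s)\<^sup>2 * (cnj \<eta>)\<^sup>2) > 0"
    proof -
      have "norm ((of_real s)\<^sup>2 * (cnj \<eta>)\<^sup>2) < 1"
        using s eta by (simp add: norm_mult norm_power power_less_one_iff abs_square_less_1)
      then have "(of_real s)\<^sup>2 * (cnj \<eta>)\<^sup>2 \<noteq> 1" by auto
      then show ?thesis by simp
    qed
    show ?thesis unfolding L_def R_def
      using A pos1 pos2 by (simp add: divide_le_eq le_divide_eq mult_ac)
  qed
  have ev: "eventually (\<lambda>s. L s \<le> R s) (at_left (1::real))"
    using eventually_at_left_real[of 0 1] by (auto elim!: eventually_mono intro: LR)
  have Gd: "(G has_field_derivative deriv G \<eta>) (at \<eta>)"
  proof -
    have "\<eta> \<in> S" using S eta by auto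
    from holomorphic_derivI[OF hol S(1) this] show ?thesis .
  qed
  have gd0: "((\<lambda>z. G (z * \<eta>)) has_field_derivative (deriv G \<eta> * \<eta>)) (at (of_real 1))"
  proof -
    have "((\<lambda>z. z * \<eta>) has_field_derivative \<eta>) (at (of_real 1))"
      by (auto intro!: derivative_eq_intros)
    moreover have "DERIV G ((\<lambda>z. z * \<eta>) (of_real 1)) :> deriv G \<eta>" using Gd by simp
    ultimately show ?thesis using DERIV_chain2[where f=G and g="\<lambda>z. z * \<eta>" and s=UNIV] by simp
  qed
  have gd: "(g has_vector_derivative (deriv G \<eta> * \<eta>)) (at 1)"
    using has_vector_derivative_real_field[OF gd0] by (simp add: g_def)
  define D where "D = deriv G \<eta> * \<eta>"
  define q where "q = (\<lambda>s. (Re (g s))\<^sup>2 + (Im (g s))\<^sup>2)"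
  have qd: "(q has_real_derivative (2 * Re (g 1) * Re D + 2 * Im (g 1) * Im D)) (at 1)"
  proof -
    have gdD: "(g has_vector_derivative D) (at 1)" using gd by (simp add: D_def)
    show ?thesis unfolding q_def
      by (rule derivative_eq_intros gdD[THEN has_field_derivative_Re] gdD[THEN has_field_derivative_Im] refl)+
         (simp add: algebra_simps)
  qed
  have q1: "q 1 = 1" using unit[OF eta] by (simp add: q_def g_def cmod_power2[symmetric])
  have qn: "q s = (norm (g s))\<^sup>2" for s by (simp add: q_def cmod_power2)
  have lamq: "2 * Re (g 1) * Re D + 2 * Im (g 1) * Im D = 2 * Re (cnj c * deriv G \<eta> * \<eta>)"
    by (simp add: c_def g_def D_def algebra_simps)
  have "((\<lambda>s. (q s - q 1) / (s - 1)) \<longlongrightarrow> 2 * Re (cnj c * deriv G \<eta> * \<eta>)) (at 1)"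
    using qd lamq by (simp add: has_field_derivative_iff)
  then have t1: "((\<lambda>s. (q s - q 1) / (s - 1)) \<longlongrightarrow> 2 * Re (cnj c * deriv G \<eta> * \<eta>)) (at_left 1)"
    by (rule tendsto_mono[OF at_le, rotated]) simp
  have t2: "((\<lambda>s::real. 1 + s) \<longlongrightarrow> 2) (at_left 1)"
    by (auto intro!: tendsto_eq_intros)
  have LIM1: "((\<lambda>s. ((q s - q 1) / (s - 1)) / (1 + s)) \<longlongrightarrow> (2 * Re (cnj c * deriv G \<eta> * \<eta>)) / 2) (at_left 1)"
    by (rule tendsto_divide[OF t1 t2]) simp
  have EV1: "eventually (\<lambda>s. ((q s - q 1) / (s - 1)) / (1 + s) = R s) (at_left 1)"
  proof -
    have "eventually (\<lambda>s::real. 0 < s \<and> s < 1) (at_left 1)"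
      using eventually_at_left_real[of 0 1] by simp
    then show ?thesis
    proof (rule eventually_mono)
      fix s :: real assume s: "0 < s \<and> s < 1"
      then have "s - 1 \<noteq> 0" "1 + s \<noteq> 0" "1 - s\<^sup>2 \<noteq> 0" using mult_strict_mono[of s 1 s 1] by (auto simp: power2_eq_square)
      then show "((q s - q 1) / (s - 1)) / (1 + s) = R s"
        unfolding R_def q1 qn[symmetric] by (simp add: field_simps power2_eq_square)
    qed
  qed
  have tR0: "(R \<longlongrightarrow> 2 * Re (cnj c * deriv G \<eta> * \<eta>) / 2) (at_left 1)"
    using tendsto_cong[OF EV1] LIM1 by simp
  have "2 * Re (cnj c * deriv G \<eta> * \<eta>) / 2 = Re (cnj c * deriv G \<eta> * \<eta>)" by simp
  then have tR: "(R \<longlongrightarrow> Re (cnj c * deriv G \<eta> * \<eta>)) (at_left 1)" using tR0 by metis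
  show ?thesis
  proof (cases "(cnj \<eta>)\<^sup>2 = 1")
    case True
    have "eventually (\<lambda>s. 0 \<le> R s) (at_left (1::real))"
      using ev
    proof (rule eventually_mono)
      fix s assume "L s \<le> R s"
      moreover have "0 \<le> L s" unfolding L_def by simp
      ultimately show "0 \<le> R s" by linarith
    qed
    then have "0 \<le> Re (cnj c * deriv G \<eta> * \<eta>)"
      by (rule tendsto_lowerbound[OF tR]) simp
    then show ?thesis using True by (simp add: c_def)
  next
    case False
    have contG: "isCont G \<eta>"
      using Gd DERIV_isCont by blast
    have tg: "(g \<longlongrightarrow> c) (at_left 1)"
    proof -
      have "isCont (\<lambda>s::real. of_real s * \<eta>) 1" by (intro continuous_intros)
      then have "isCont (\<lambda>s::real. G (of_real s * \<eta>)) 1"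
        using continuous_at_compose[of 1 "\<lambda>s::real. of_real s * \<eta>" G] contG by (simp add: o_def)
      then have "(g \<longlongrightarrow> g 1) (at 1)" unfolding g_def isCont_def .
      then have "(g \<longlongrightarrow> g 1) (at_left 1)" by (rule tendsto_mono[OF at_le[OF subset_UNIV]])
      moreover have "g 1 = c" by (simp add: g_def c_def)
      ultimately show ?thesis by simp
    qed
    have "(L \<longlongrightarrow> norm (1 - (cnj c)\<^sup>2) / norm (1 - (of_real 1)\<^sup>2 * (cnj \<eta>)\<^sup>2)) (at_left 1)"
      unfolding L_def
      by (intro tendsto_intros tg) (use False in simp)
    then have tL: "(L \<longlongrightarrow> norm (1 - (cnj c)\<^sup>2) / norm (1 - (cnj \<eta>)\<^sup>2)) (at_left 1)" by simp
    have "norm (1 - (cnj c)\<^sup>2) / norm (1 - (cnj \<eta>)\<^sup>2) \<le> Re (cnj c * deriv G \<eta> * \<eta>)"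
      by (rule tendsto_le[OF _ tR tL ev]) simp
    then show ?thesis unfolding c_def .
  qed
qed

lemma phase_spec:
  assumes cont: "continuous_on UNIV (\<lambda>\<omega>. f (cis \<omega>))" and nz: "\<And>\<omega>. f (cis \<omega>) \<noteq> 0"
  shows "continuous_on UNIV (phase f) \<and>
         (\<forall>\<omega>. f (cis \<omega>) = complex_of_real (norm (f (cis \<omega>))) * cis (phase f \<omega>))"
proof -
  obtain h where h: "continuous_on UNIV h" "\<And>x. x \<in> UNIV \<Longrightarrow> f (cis x) = exp (h x)"
    using continuous_logarithm_on_contractible[OF cont contractible_UNIV] nz by metis
  define \<theta> where "\<theta> = (\<lambda>x. Im (h x))"
  have c: "continuous_on UNIV \<theta>" unfolding \<theta>_def by (intro continuous_intros h(1))
  have e: "f (cis \<omega>) = complex_of_real (norm (f (cis \<omega>))) * cis (\<theta> \<omega>)" for \<omega>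
    using h(2)[of \<omega>] by (simp add: exp_eq_polar \<theta>_def norm_mult)
  have "\<exists>\<theta>. continuous_on UNIV \<theta> \<and>
       (\<forall>\<omega>. f (cis \<omega>) = complex_of_real (norm (f (cis \<omega>))) * cis (\<theta> \<omega>))"
    using c e by blast
  then show ?thesis unfolding phase_def by (rule someI_ex)
qed

lemma lift_deriv:
  fixes \<theta> :: "real \<Rightarrow> real" and \<psi> :: "real \<Rightarrow> complex"
  assumes cont: "continuous_on UNIV \<theta>" and eq: "\<And>\<omega>. cis (\<theta> \<omega>) = \<psi> \<omega>"
    and d: "(\<psi> has_vector_derivative \<psi>') (at x)"
  shows "(\<theta> has_real_derivative Im (\<psi>' / \<psi> x)) (at x)"
proof -
  have nz: "\<psi> x \<noteq> 0" using eq[of x] by (metis cis_neq_zero)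
  have "isCont \<theta> x" using cont by (simp add: continuous_on_eq_continuous_at)
  then have "eventually (\<lambda>\<omega>. dist (\<theta> \<omega>) (\<theta> x) < pi/2) (nhds x)"
  proof -
    have "(\<theta> \<longlongrightarrow> \<theta> x) (nhds x)" using \<open>isCont \<theta> x\<close> isCont_def tendsto_at_iff_tendsto_nhds by blast
    from tendstoD[OF this pi_half_gt_zero] show ?thesis .
  qed
  then have ev: "eventually (\<lambda>\<omega>. \<theta> \<omega> = \<theta> x + arcsin (Im (\<psi> \<omega> / \<psi> x))) (nhds x)"
  proof (rule eventually_mono)
    fix \<omega> assume "dist (\<theta> \<omega>) (\<theta> x) < pi/2"
    then have b: "- (pi/2) \<le> \<theta> \<omega> - \<theta> x" "\<theta> \<omega> - \<theta> x \<le> pi/2" unfolding dist_real_def by linarith+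
    have "\<psi> \<omega> / \<psi> x = cis (\<theta> \<omega> - \<theta> x)" using eq by (metis cis_divide)
    then have "Im (\<psi> \<omega> / \<psi> x) = sin (\<theta> \<omega> - \<theta> x)" by simp
    then show "\<theta> \<omega> = \<theta> x + arcsin (Im (\<psi> \<omega> / \<psi> x))" using arcsin_sin[OF b] by simp
  qed
  have d1: "((\<lambda>\<omega>. Im (\<psi> \<omega> / \<psi> x)) has_real_derivative Im (\<psi>' / \<psi> x)) (at x)"
    by (rule has_field_derivative_Im[OF has_vector_derivative_divide[OF d]])
  have d0: "DERIV arcsin (Im (\<psi> x / \<psi> x)) :> 1"
    using DERIV_arcsin[of 0] nz by simp
  have "((\<lambda>\<omega>. \<theta> x + arcsin (Im (\<psi> \<omega> / \<psi> x))) has_real_derivative (1 * Im (\<psi>' / \<psi> x))) (at x)"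
    by (rule derivative_eq_intros DERIV_chain2[OF d0 d1] refl)+ simp
  then show ?thesis
    using DERIV_cong_ev[OF refl ev refl] by simp
qed

lemma real_poly_cnj:
  "poly (map_poly complex_of_real p) (cnj z) = cnj (poly (map_poly complex_of_real p) z)"
  by (subst poly_cnj_real) (auto simp: coeff_map_poly)

lemma RHinf_G:
  assumes "f \<in> RHinf"
  obtains G S where "open S" "cball 0 1 \<subseteq> S" "G holomorphic_on S"
    "\<And>z. norm z = 1 \<Longrightarrow> f z = G (cnj z)"
    "\<And>z. z \<in> cball 0 1 \<Longrightarrow> z \<noteq> 0 \<Longrightarrow> G (cnj z) = cnj (G z)"
proof -
  obtain P Q :: "real poly" where Q0: "Q \<noteq> 0" and deg: "degree P \<le> degree Q"
    and roots: "\<And>z. poly (map_poly complex_of_real Q) z = 0 \<Longrightarrow> norm z < 1"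
    and feq: "\<And>z. poly (map_poly complex_of_real Q) z \<noteq> 0 \<Longrightarrow>
           f z = poly (map_poly complex_of_real P) z / poly (map_poly complex_of_real Q) z"
    using assms unfolding RHinf_def by blast
  define Pc where "Pc = map_poly complex_of_real P"
  define Qc where "Qc = map_poly complex_of_real Q"
  have dP: "degree Pc = degree P" unfolding Pc_def by (rule degree_map_poly) simp
  have dQ: "degree Qc = degree Q" unfolding Qc_def by (rule degree_map_poly) simp
  have Qc0: "Qc \<noteq> 0" using Q0 unfolding Qc_def by (subst map_poly_eq_0_iff) auto
  define n where "n = degree Q"
  define m where "m = degree P"
  define A where "A = monom 1 (n - m) * reflect_poly Pc"
  define B where "B = reflect_poly Qc"
  define G where "G = (\<lambda>w. poly A w / poly B w)"
  define S where "S = - {w. poly B w = 0}"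
  have B0: "B \<noteq> 0" using Qc0 by (simp add: B_def)
  have "finite {w. poly B w = 0}" using poly_roots_finite[OF B0] .
  then have oS: "open S" unfolding S_def by (simp add: finite_imp_closed open_Compl)
  have inv_nz: "poly Qc (inverse w) \<noteq> 0" if "norm w \<le> 1" "w \<noteq> 0" for w
  proof
    assume "poly Qc (inverse w) = 0"
    then have "norm (inverse w) < 1" using roots unfolding Qc_def by blast
    moreover have "norm (inverse w) \<ge> 1" using that by (simp add: norm_inverse one_le_inverse_iff)
    ultimately show False by simp
  qed
  have Bw: "poly B w = w ^ n * poly Qc (inverse w)" if "w \<noteq> 0" for w
    using poly_reflect_poly_nz[OF that, of Qc] by (simp add: B_def dQ n_def)
  have Aw: "poly A w = w ^ n * poly Pc (inverse w)" if "w \<noteq> 0" for w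
  proof -
    have "poly A w = w ^ (n - m) * (w ^ m * poly Pc (inverse w))"
      using poly_reflect_poly_nz[OF that, of Pc] by (simp add: A_def dP m_def poly_monom)
    also have "\<dots> = w ^ n * poly Pc (inverse w)"
      using deg by (simp add: n_def m_def power_add[symmetric] mult.assoc)
    finally show ?thesis .
  qed
  have Gw: "G w = poly Pc (inverse w) / poly Qc (inverse w)" if "w \<noteq> 0" for w
    using that by (simp add: G_def Aw Bw)
  have sub: "cball 0 1 \<subseteq> S"
  proof
    fix w :: complex assume "w \<in> cball 0 1"
    then have w: "norm w \<le> 1" by simp
    show "w \<in> S"
    proof (cases "w = 0")
      case True
      then show ?thesis using Qc0 by (simp add: S_def B_def)
    next
      case False
      then show ?thesis using inv_nz[OF w False] Bw[OF False] by (simp add: S_def)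
    qed
  qed
  have hol: "G holomorphic_on S"
    unfolding G_def S_def by (intro holomorphic_intros) auto
  have fG: "f z = G (cnj z)" if "norm z = 1" for z
  proof -
    have z0: "z \<noteq> 0" using that by auto
    have ic: "inverse (cnj z) = z"
    proof -
      have "z * cnj z = 1" using complex_norm_square[of z] that by simp
      then show ?thesis by (metis inverse_unique mult.commute)
    qed
    have "poly Qc z \<noteq> 0" using roots that unfolding Qc_def by fastforce
    then show ?thesis using feq[of z] Gw[of "cnj z"] z0 ic by (simp add: Pc_def Qc_def)
  qed
  have sym: "G (cnj z) = cnj (G z)" if "z \<in> cball 0 1" "z \<noteq> 0" for z
  proof -
    have "G (cnj z) = poly Pc (inverse (cnj z)) / poly Qc (inverse (cnj z))"
      using Gw that by simp
    also have "\<dots> = cnj (poly Pc (inverse z) / poly Qc (inverse z))"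
      by (simp only: complex_cnj_inverse[symmetric] Pc_def Qc_def real_poly_cnj complex_cnj_divide)
    also have "\<dots> = cnj (G z)" using Gw that by simp
    finally show ?thesis .
  qed
  show ?thesis using that oS sub hol fG sym by blast
qed

lemma AP_unit: "f \<in> AP \<Longrightarrow> norm z = 1 \<Longrightarrow> norm (f z) = 1"
proof -
  assume f: "f \<in> AP" and z: "norm z = 1"
  have "cis (Arg z) = z" using rcis_cmod_Arg[of z] z by (simp add: rcis_def)
  moreover have "norm (f (cis (Arg z))) = 1" using f by (simp add: AP_def)
  ultimately show ?thesis by simp
qed

lemma AP_phase:
  assumes fAP: "f \<in> AP"
  shows "\<And>\<omega>. f (cis \<omega>) = cis (phase f \<omega>)"
    and "phase_deriv f x \<le> - (norm (1 - (cnj (f (cis x)))\<^sup>2) / norm (1 - (cis x)\<^sup>2))"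
proof -
  have fR: "f \<in> RHinf" using fAP by (simp add: AP_def)
  obtain S G where oS: "open S" and sub: "cball 0 1 \<subseteq> S" and hol: "G holomorphic_on S"
    and fG: "\<And>z. norm z = 1 \<Longrightarrow> f z = G (cnj z)"
    and sym: "\<And>z. z \<in> cball 0 1 \<Longrightarrow> z \<noteq> 0 \<Longrightarrow> G (cnj z) = cnj (G z)"
    apply (rule RHinf_G[OF fR]) by iprover
  have Gu: "norm (G z) = 1" if "norm z = 1" for z
    using fG[of "cnj z"] AP_unit[OF fAP, of "cnj z"] that by simp
  have psi: "f (cis \<omega>) = G (exp (- (\<i> * of_real \<omega>)))" for \<omega>
  proof -
    have "cnj (cis \<omega>) = cis (-\<omega>)" by (simp add: cis_cnj)
    also have "\<dots> = exp (- (\<i> * of_real \<omega>))" using cis_conv_exp[of "-\<omega>"] by simp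
    finally show ?thesis using fG[of "cis \<omega>"] by simp
  qed
  have ex1: "exp (- (\<i> * of_real \<omega>)) \<in> S" for \<omega>
  proof -
    have "norm (exp (- (\<i> * of_real \<omega>))) = 1" by simp
    then show ?thesis using sub by auto
  qed
  have contG: "continuous_on S G" using hol by (rule holomorphic_on_imp_continuous_on)
  have cpsi: "continuous_on UNIV (\<lambda>\<omega>. f (cis \<omega>))"
  proof -
    have "continuous_on UNIV (\<lambda>\<omega>::real. exp (- (\<i> * of_real \<omega>)))" by (intro continuous_intros)
    then have "continuous_on UNIV (\<lambda>\<omega>::real. G (exp (- (\<i> * of_real \<omega>))))"
      by (rule continuous_on_compose2[OF contG]) (use ex1 in auto)
    then show ?thesis by (simp add: psi)
  qed
  have nz: "f (cis \<omega>) \<noteq> 0" for \<omega> using AP_unit[OF fAP, of "cis \<omega>"] by auto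
  note ps = phase_spec[OF cpsi nz]
  show eqc: "\<And>\<omega>. f (cis \<omega>) = cis (phase f \<omega>)"
    using ps AP_unit[OF fAP] by simp
  define \<eta> where "\<eta> = exp (- (\<i> * of_real x))"
  have \<eta>1: "norm \<eta> = 1" by (simp add: \<eta>_def)
  have \<eta>S: "\<eta> \<in> S" using ex1 by (simp add: \<eta>_def)
  have Gd: "(G has_field_derivative deriv G \<eta>) (at \<eta>)" using holomorphic_derivI[OF hol oS \<eta>S] .
  have Hd: "((\<lambda>z. G (exp (- (\<i> * z)))) has_field_derivative (deriv G \<eta> * (exp (- (\<i> * of_real x)) * (- \<i>)))) (at (of_real x))"
  proof -
    have D1: "((\<lambda>z. exp (- (\<i> * z))) has_field_derivative (exp (- (\<i> * of_real x)) * (- \<i>))) (at (of_real x))"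
      by (rule derivative_eq_intros refl)+ simp
    have D2: "DERIV G ((\<lambda>z. exp (- (\<i> * z))) (of_real x)) :> deriv G \<eta>" using Gd by (simp add: \<eta>_def)
    show ?thesis using DERIV_chain2[OF D2 D1] .
  qed
  have vd: "((\<lambda>\<omega>. f (cis \<omega>)) has_vector_derivative (deriv G \<eta> * (\<eta> * (- \<i>)))) (at x)"
    using has_vector_derivative_real_field[OF Hd] by (simp add: psi \<eta>_def)
  have pd: "(phase f has_real_derivative Im (deriv G \<eta> * (\<eta> * (- \<i>)) / f (cis x))) (at x)"
    by (rule lift_deriv[OF conjunct1[OF ps]]) (use eqc vd in auto)
  have fx: "f (cis x) = G \<eta>" using psi by (simp add: \<eta>_def)
  have Gn: "norm (G \<eta>) = 1" using Gu \<eta>1 by simp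
  have inv: "inverse (G \<eta>) = cnj (G \<eta>)"
  proof -
    have "G \<eta> * cnj (G \<eta>) = 1" using complex_norm_square[of "G \<eta>"] Gn by simp
    then show ?thesis by (metis inverse_unique)
  qed
  have "Im (deriv G \<eta> * (\<eta> * (- \<i>)) / f (cis x)) = - Re (cnj (G \<eta>) * deriv G \<eta> * \<eta>)"
  proof -
    have "deriv G \<eta> * (\<eta> * (- \<i>)) / f (cis x) = - \<i> * (cnj (G \<eta>) * deriv G \<eta> * \<eta>)"
      using inv by (simp add: fx divide_inverse mult_ac)
    then show ?thesis by simp
  qed
  then have pdv: "phase_deriv f x = - Re (cnj (G \<eta>) * deriv G \<eta> * \<eta>)"
    using DERIV_imp_deriv[OF pd] by (simp add: phase_deriv_def)
  have bb: "norm (1 - (cnj (G \<eta>))\<^sup>2) / norm (1 - (cnj \<eta>)\<^sup>2) \<le> Re (cnj (G \<eta>) * deriv G \<eta> * \<eta>)"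
    by (rule boundary_bound[OF oS sub hol Gu sym \<eta>1])
  have ce: "cnj \<eta> = cis x" by (simp add: \<eta>_def cis_conv_exp exp_cnj)
  show "phase_deriv f x \<le> - (norm (1 - (cnj (f (cis x)))\<^sup>2) / norm (1 - (cis x)\<^sup>2))"
    using bb pdv unfolding fx ce by simp
qed

lemma AP_cont_phase: "f \<in> AP \<Longrightarrow> continuous_on UNIV (phase f)"
proof -
  assume fAP: "f \<in> AP"
  have fR: "f \<in> RHinf" using fAP by (simp add: AP_def)
  obtain S G where oS: "open S" and sub: "cball 0 1 \<subseteq> S" and hol: "G holomorphic_on S"
    and fG: "\<And>z. norm z = 1 \<Longrightarrow> f z = G (cnj z)"
    and sym: "\<And>z. z \<in> cball 0 1 \<Longrightarrow> z \<noteq> 0 \<Longrightarrow> G (cnj z) = cnj (G z)"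
    apply (rule RHinf_G[OF fR]) by iprover
  have psi: "f (cis \<omega>) = G (exp (- (\<i> * of_real \<omega>)))" for \<omega>
  proof -
    have "cnj (cis \<omega>) = cis (-\<omega>)" by (simp add: cis_cnj)
    also have "\<dots> = exp (- (\<i> * of_real \<omega>))" using cis_conv_exp[of "-\<omega>"] by simp
    finally show ?thesis using fG[of "cis \<omega>"] by simp
  qed
  have ex1: "exp (- (\<i> * of_real \<omega>)) \<in> S" for \<omega>
  proof -
    have "norm (exp (- (\<i> * of_real \<omega>))) = 1" by simp
    then show ?thesis using sub by auto
  qed
  have contG: "continuous_on S G" using hol by (rule holomorphic_on_imp_continuous_on)
  have cpsi: "continuous_on UNIV (\<lambda>\<omega>. f (cis \<omega>))"
  proof -
    have "continuous_on UNIV (\<lambda>\<omega>::real. exp (- (\<i> * of_real \<omega>)))" by (intro continuous_intros)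
    then have "continuous_on UNIV (\<lambda>\<omega>::real. G (exp (- (\<i> * of_real \<omega>))))"
      by (rule continuous_on_compose2[OF contG]) (use ex1 in auto)
    then show ?thesis by (simp add: psi)
  qed
  have nz: "f (cis \<omega>) \<noteq> 0" for \<omega> using AP_unit[OF fAP, of "cis \<omega>"] by auto
  show ?thesis using phase_spec[OF cpsi nz] by blast
qed

lemma AP_phase_deriv_eq:
  assumes "f \<in> AP" and d: "((\<lambda>\<omega>. f (cis \<omega>)) has_vector_derivative \<psi>') (at x)"
  shows "phase_deriv f x = Im (\<psi>' / f (cis x))"
proof -
  have "(phase f has_real_derivative Im (\<psi>' / f (cis x))) (at x)"
    by (rule lift_deriv[OF AP_cont_phase[OF assms(1)]]) (use AP_phase(1)[OF assms(1)] d in auto)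
  then show ?thesis unfolding phase_deriv_def by (rule DERIV_imp_deriv)
qed

lemma hinf_norm_AP: "f \<in> AP \<Longrightarrow> hinf_norm f = 1"
proof -
  assume "f \<in> AP"
  then have "\<And>\<omega>. norm (f (cis \<omega>)) = 1" by (simp add: AP_def)
  moreover have "{-pi<..pi} \<noteq> {}" using pi_gt_zero by auto
  ultimately show ?thesis unfolding hinf_norm_def by simp
qed

lemma AP_at_intro:
  assumes "f \<in> AP" and "f (cis \<omega>p) = cis \<theta>p"
  shows "f \<in> AP_at \<omega>p \<theta>p"
proof -
  have fR: "f \<in> RHinf" using assms by (simp add: AP_def)
  have n1: "norm (f (cis \<omega>p)) = 1" using assms(2) by simp
  have "cis (phase f \<omega>p) = cis \<theta>p" using AP_phase(1)[OF assms(1)] assms(2) by metis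
  then have "cis (phase f \<omega>p - \<theta>p) = 1" by (simp add: cis_divide[symmetric])
  then obtain n :: int where "phase f \<omega>p - \<theta>p = of_int n * (2 * pi)" using cis_eq_1_iff by blast
  then have "\<exists>k::int. phase f \<omega>p = \<theta>p + 2 * pi * of_int k" by (intro exI[of _ n]) (simp add: algebra_simps)
  then show ?thesis using assms(1) fR n1 hinf_norm_AP[OF assms(1)]
    by (simp add: AP_at_def RF_def)
qed

lemma norm_1_minus_cis2: "norm (1 - cis (2 * t)) = 2 * \<bar>sin t\<bar>"
proof -
  have "(norm (1 - cis (2 * t)))\<^sup>2 = (1 - cos (2 * t))\<^sup>2 + (sin (2 * t))\<^sup>2"
    by (simp add: cmod_power2)
  also have "\<dots> = (2 * (sin t)\<^sup>2)\<^sup>2 + (2 * sin t * cos t)\<^sup>2"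
    by (simp add: cos_double_sin sin_double)
  also have "\<dots> = 4 * (sin t)\<^sup>2 * ((sin t)\<^sup>2 + (cos t)\<^sup>2)"
    by (simp only: power2_eq_square algebra_simps)
  also have "\<dots> = 4 * (sin t)\<^sup>2" by (simp only: sin_cos_squared_add mult_1_right)
  also have "\<dots> = (2 * \<bar>sin t\<bar>)\<^sup>2" by (simp add: power_mult_distrib)
  finally have "(norm (1 - cis (2 * t)))\<^sup>2 = (2 * \<bar>sin t\<bar>)\<^sup>2" by (simp add: power_mult_distrib)
  then show ?thesis using power2_eq_iff_nonneg[of "norm (1 - cis (2 * t))" "2 * \<bar>sin t\<bar>"] by simp
qed

lemma AP_at_bound:
  assumes "f \<in> AP_at \<omega>p \<theta>p"
  shows "phase_deriv f \<omega>p \<le> - (\<bar>sin \<theta>p\<bar> / \<bar>sin \<omega>p\<bar>)"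
proof -
  have fAP: "f \<in> AP" using assms by (simp add: AP_at_def)
  obtain k :: int where k: "phase f \<omega>p = \<theta>p + 2 * pi * of_int k"
    using assms by (auto simp: AP_at_def RF_def)
  have "f (cis \<omega>p) = cis \<theta>p"
    using AP_phase(1)[OF fAP, of \<omega>p] k by (simp add: cis_mult[symmetric])
  then have "phase_deriv f \<omega>p \<le> - (norm (1 - (cnj (cis \<theta>p))\<^sup>2) / norm (1 - (cis \<omega>p)\<^sup>2))"
    using AP_phase(2)[OF fAP, of \<omega>p] by simp
  moreover have "(cnj (cis \<theta>p))\<^sup>2 = cis (2 * (- \<theta>p))"
    using Complex.DeMoivre[of "-\<theta>p" 2] unfolding cis_cnj by (simp only: of_nat_numeral)
  moreover have "(cis \<omega>p)\<^sup>2 = cis (2 * \<omega>p)"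
    using Complex.DeMoivre[of "\<omega>p" 2] by (simp only: of_nat_numeral)
  moreover have "norm (1 - cis (2 * (- \<theta>p))) = 2 * \<bar>sin \<theta>p\<bar>" using norm_1_minus_cis2[of "-\<theta>p"] by simp
  moreover have "norm (1 - cis (2 * \<omega>p)) = 2 * \<bar>sin \<omega>p\<bar>" by (rule norm_1_minus_cis2)
  ultimately show ?thesis by (simp only:)
qed

lemma map_poly_of_real_pCons [simp]:
  "map_poly complex_of_real (pCons c p) = pCons (complex_of_real c) (map_poly complex_of_real p)"
  by (rule map_poly_pCons) simp

lemma const_AP:
  fixes r :: real assumes r: "\<bar>r\<bar> = 1"
  shows "(\<lambda>z. complex_of_real r) \<in> AP"
proof -
  have "(\<lambda>z. complex_of_real r) \<in> RHinf"
    unfolding RHinf_def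
    by (rule CollectI, rule exI[of _ "[:r:]"], rule exI[of _ "[:1:]"]) simp
  then show ?thesis unfolding AP_def using r by simp
qed

lemma const_deriv:
  fixes r :: real assumes r: "\<bar>r\<bar> = 1"
  shows "phase_deriv (\<lambda>z. complex_of_real r) x = 0"
proof -
  have "phase_deriv (\<lambda>z. complex_of_real r) x = Im (0 / complex_of_real r)"
    by (rule AP_phase_deriv_eq[OF const_AP[OF r]]) (rule has_vector_derivative_const)
  then show ?thesis by simp
qed

lemma mob_unit:
  fixes a :: real and z :: complex
  assumes "norm z = 1"
  shows "norm (of_real a * z + 1) = norm (z + of_real a)"
proof -
  have h: "(Re z)\<^sup>2 + (Im z)\<^sup>2 = 1" using assms by (simp add: cmod_power2[symmetric])
  have "(norm (of_real a * z + 1))\<^sup>2 = (norm (z + of_real a))\<^sup>2"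
  proof -
    have "(norm (of_real a * z + 1))\<^sup>2 = a\<^sup>2 * ((Re z)\<^sup>2 + (Im z)\<^sup>2) + 2 * a * Re z + 1"
      unfolding cmod_power2 by (simp add: power2_eq_square algebra_simps)
    also have "\<dots> = (Re z)\<^sup>2 + (Im z)\<^sup>2 + 2 * a * Re z + a\<^sup>2" using h by simp
    also have "\<dots> = (norm (z + of_real a))\<^sup>2"
      unfolding cmod_power2 by (simp add: power2_eq_square algebra_simps)
    finally show ?thesis .
  qed
  then show ?thesis by (simp add: power2_eq_iff_nonneg)
qed

lemma mob_AP:
  fixes a r :: real
  assumes a: "\<bar>a\<bar> < 1" and r: "\<bar>r\<bar> = 1"
  shows "(\<lambda>z. complex_of_real r * (of_real a * z + 1) / (z + of_real a)) \<in> AP"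
proof -
  have "(\<lambda>z. complex_of_real r * (of_real a * z + 1) / (z + of_real a)) \<in> RHinf"
  proof -
    have pQ: "poly (map_poly complex_of_real [:a, 1:]) z = z + of_real a" for z
      by (simp add: add.commute)
    have pP: "poly (map_poly complex_of_real [:r, r * a:]) z = complex_of_real r * (of_real a * z + 1)" for z
      by (simp add: distrib_left mult.commute mult.left_commute)
    show ?thesis unfolding RHinf_def
  proof (rule CollectI, rule exI[of _ "[:r, r * a:]"], rule exI[of _ "[:a, 1:]"], intro conjI allI impI)
    show "[:a, 1:] \<noteq> 0" by simp
    show "degree [:r, r * a:] \<le> degree [:a, 1:]" by simp
  next
    fix z :: complex assume "poly (map_poly complex_of_real [:a, 1:]) z = 0"
    then have "z + of_real a = 0" unfolding pQ .
    then have "z = - of_real a" by (metis add_eq_0_iff2)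
    then show "norm z < 1" using a by simp
  next
    fix z :: complex assume "poly (map_poly complex_of_real [:a, 1:]) z \<noteq> 0"
    then show "complex_of_real r * (of_real a * z + 1) / (z + of_real a) =
      poly (map_poly complex_of_real [:r, r * a:]) z / poly (map_poly complex_of_real [:a, 1:]) z"
      unfolding pP pQ by simp
  qed
  qed
  moreover have "norm (complex_of_real r * (of_real a * cis \<omega> + 1) / (cis \<omega> + of_real a)) = 1" for \<omega>
  proof -
    have n: "norm (cis \<omega> + of_real a) > 0"
    proof -
      have "norm (cis \<omega>) - norm (complex_of_real a) \<le> norm (cis \<omega> + complex_of_real a)" by (rule norm_diff_ineq)
      moreover have "norm (cis \<omega>) = 1" "norm (complex_of_real a) = \<bar>a\<bar>" by simp_all
      ultimately show ?thesis using a by linarith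
    qed
    then show ?thesis using mob_unit[of "cis \<omega>" a] r by (simp add: norm_divide norm_mult)
  qed
  ultimately show ?thesis unfolding AP_def by simp
qed

lemma alg1:
  fixes r u w c y :: complex
  assumes "r \<noteq> 0" "u \<noteq> 0" "w \<noteq> 0"
  shows "(r * (c / u\<^sup>2)) * y / (r * w / u) = c * y / (u * w)"
  using assms by (simp add: field_simps power2_eq_square)

lemma alg2:
  fixes c y :: complex and K :: real
  assumes "y \<noteq> 0" "K \<noteq> 0"
  shows "c * (y * \<i>) / (y * of_real K) = \<i> * (c / of_real K)"
  using assms by (simp add: field_simps)

lemma mob_deriv:
  fixes a r x :: real
  assumes a: "\<bar>a\<bar> < 1" and r: "\<bar>r\<bar> = 1"
  shows "phase_deriv (\<lambda>z. complex_of_real r * (of_real a * z + 1) / (z + of_real a)) x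
         = (a\<^sup>2 - 1) / (1 + a\<^sup>2 + 2 * a * cos x)"
proof -
  define F where "F = (\<lambda>z. complex_of_real r * (of_real a * z + 1) / (z + of_real a))"
  define \<zeta> where "\<zeta> = cis x"
  have z1: "norm \<zeta> = 1" by (simp add: \<zeta>_def)
  have nz1: "\<zeta> + of_real a \<noteq> 0"
  proof -
    have "norm \<zeta> - norm (complex_of_real a) \<le> norm (\<zeta> + complex_of_real a)" by (rule norm_diff_ineq)
    moreover have "norm (complex_of_real a) = \<bar>a\<bar>" by simp
    ultimately have "norm (\<zeta> + complex_of_real a) > 0" using a z1 by linarith
    then show ?thesis by auto
  qed
  have nz2: "of_real a * \<zeta> + 1 \<noteq> 0" using mob_unit[OF z1, of a] nz1 by auto
  have r0: "complex_of_real r \<noteq> 0" using r by auto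
  define K where "K = 1 + a\<^sup>2 + 2 * a * cos x"
  have key: "(\<zeta> + of_real a) * (of_real a * \<zeta> + 1) = \<zeta> * of_real K"
  proof (rule complex_eqI)
    have R: "Re \<zeta> = cos x" "Im \<zeta> = sin x" by (simp_all add: \<zeta>_def)
    have "Re ((\<zeta> + of_real a) * (of_real a * \<zeta> + 1)) = (cos x + a) * (a * cos x + 1) - sin x * (a * sin x)"
      by (simp add: R)
    also have "\<dots> = cos x * K" unfolding K_def using sin_cos_squared_add[of x] by algebra
    also have "\<dots> = Re (\<zeta> * of_real K)" by (simp add: R)
    finally show "Re ((\<zeta> + of_real a) * (of_real a * \<zeta> + 1)) = Re (\<zeta> * of_real K)" .
    have "Im ((\<zeta> + of_real a) * (of_real a * \<zeta> + 1)) = (cos x + a) * (a * sin x) + sin x * (a * cos x + 1)"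
      by (simp add: R)
    also have "\<dots> = sin x * K" unfolding K_def by algebra
    also have "\<dots> = Im (\<zeta> * of_real K)" by (simp add: R)
    finally show "Im ((\<zeta> + of_real a) * (of_real a * \<zeta> + 1)) = Im (\<zeta> * of_real K)" .
  qed
  define F' where "F' = complex_of_real r * ((of_real a * (\<zeta> + of_real a) - (of_real a * \<zeta> + 1)) / (\<zeta> + of_real a)\<^sup>2)"
  have dF: "(F has_field_derivative F') (at \<zeta>)"
  proof -
    have d1: "((\<lambda>z. complex_of_real r * (of_real a * z + 1)) has_field_derivative complex_of_real r * of_real a) (at \<zeta>)"
      by (rule derivative_eq_intros refl)+ simp
    have d2: "((\<lambda>z. z + complex_of_real a) has_field_derivative 1) (at \<zeta>)"
      by (rule derivative_eq_intros refl)+ simp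
    have "F' = (complex_of_real r * of_real a * (\<zeta> + of_real a) - complex_of_real r * (of_real a * \<zeta> + 1) * 1) / ((\<zeta> + of_real a) * (\<zeta> + of_real a))"
      unfolding F'_def by (simp add: power2_eq_square right_diff_distrib mult.assoc)
    then show ?thesis unfolding F_def using DERIV_divide[OF d1 d2 nz1] by simp
  qed
  have dE: "((\<lambda>z. exp (\<i> * z)) has_field_derivative (exp (\<i> * of_real x) * \<i>)) (at (of_real x))"
    by (rule derivative_eq_intros refl)+ simp
  have dF2: "DERIV F ((\<lambda>z. exp (\<i> * z)) (of_real x)) :> F'" using dF by (simp add: \<zeta>_def cis_conv_exp)
  have dH: "((\<lambda>z. F (exp (\<i> * z))) has_field_derivative F' * (exp (\<i> * of_real x) * \<i>)) (at (of_real x))"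
    using DERIV_chain2[OF dF2 dE] .
  have vd: "((\<lambda>\<omega>. F (cis \<omega>)) has_vector_derivative F' * (\<zeta> * \<i>)) (at x)"
    using has_vector_derivative_real_field[OF dH] by (simp add: cis_conv_exp \<zeta>_def)
  have pd: "phase_deriv F x = Im (F' * (\<zeta> * \<i>) / F (cis x))"
    by (rule AP_phase_deriv_eq[OF _ vd]) (use mob_AP[OF a r] in \<open>simp add: F_def\<close>)
  have Kpos: "K \<noteq> 0"
  proof
    assume "K = 0"
    then have "(\<zeta> + of_real a) * (of_real a * \<zeta> + 1) = 0" using key by simp
    then show False using nz1 nz2 by simp
  qed
  have "F' * (\<zeta> * \<i>) / F (cis x) = \<i> * of_real ((a\<^sup>2 - 1) / K)"
  proof -
    have num: "of_real a * (\<zeta> + of_real a) - (of_real a * \<zeta> + 1) = complex_of_real (a\<^sup>2 - 1)"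
      by (simp add: algebra_simps power2_eq_square)
    have Fz: "F (cis x) = complex_of_real r * (of_real a * \<zeta> + 1) / (\<zeta> + of_real a)"
      by (simp add: F_def \<zeta>_def)
    have "F' * (\<zeta> * \<i>) / F (cis x) = complex_of_real (a\<^sup>2 - 1) * (\<zeta> * \<i>) / ((\<zeta> + of_real a) * (of_real a * \<zeta> + 1))"
      unfolding Fz F'_def num by (rule alg1[OF r0 nz1 nz2])
    also have "\<dots> = complex_of_real (a\<^sup>2 - 1) * (\<zeta> * \<i>) / (\<zeta> * of_real K)" unfolding key ..
    also have "\<dots> = \<i> * (complex_of_real (a\<^sup>2 - 1) / of_real K)"
      using Kpos z1 by (intro alg2) auto
    also have "\<dots> = \<i> * of_real ((a\<^sup>2 - 1) / K)" by simp
    finally show ?thesis .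
  qed
  then have "phase_deriv F x = (a\<^sup>2 - 1) / K" using pd by simp
  then show ?thesis by (simp add: F_def K_def)
qed

lemma mob_choice:
  fixes \<omega> \<theta> :: real
  assumes w: "0 < \<omega>" "\<omega> < pi" and st: "sin \<theta> \<noteq> 0"
  shows "\<exists>r a. (r = 1 \<or> r = -1) \<and> \<bar>a\<bar> < 1 \<and>
     complex_of_real r * (of_real a * cis \<omega> + 1) / (cis \<omega> + of_real a) = cis \<theta> \<and>
     (a\<^sup>2 - 1) / (1 + a\<^sup>2 + 2 * a * cos \<omega>) = - \<bar>sin \<theta> / sin \<omega>\<bar>"
proof -
  define r :: real where "r = (if sin \<theta> > 0 then -1 else 1)"
  have r2: "r\<^sup>2 = 1" by (simp add: r_def)
  have rs: "r * sin \<theta> = - \<bar>sin \<theta>\<bar>" using st by (simp add: r_def)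
  have sw: "sin \<omega> > 0" using w by (simp add: sin_gt_zero)
  define cw where "cw = cos \<omega>"
  define sw' where "sw' = sin \<omega>"
  define ct where "ct = cos \<theta>"
  define stt where "stt = sin \<theta>"
  have pw: "sw'\<^sup>2 + cw\<^sup>2 = 1" by (simp add: sw'_def cw_def)
  have pt: "stt\<^sup>2 + ct\<^sup>2 = 1" by (simp add: stt_def ct_def)
  define N where "N = r * ct - cw"
  define D where "D = 1 - r * (cw * ct + sw' * stt)"
  define E where "E = 1 - r * (cw * ct - sw' * stt)"
  have DE: "D - E = 2 * sw' * \<bar>stt\<bar>"
  proof -
    have "D - E = - 2 * sw' * (r * stt)" by (simp add: D_def E_def algebra_simps)
    then show ?thesis using rs by (simp add: stt_def)
  qed
  have E0: "E \<ge> 0"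
  proof -
    have "\<bar>cw * ct - sw' * stt\<bar> \<le> 1"
      using abs_cos_le_one[of "\<omega> + \<theta>"] by (simp add: cos_add cw_def ct_def sw'_def stt_def)
    moreover have "\<bar>r\<bar> = 1" by (simp add: r_def)
    ultimately have "\<bar>r * (cw * ct - sw' * stt)\<bar> \<le> 1" by (simp add: abs_mult)
    then show ?thesis unfolding E_def by (simp add: abs_le_iff)
  qed
  have DEp: "D - E > 0" using DE sw st by (simp add: sw'_def stt_def)
  have Dp: "D > 0" using DEp E0 by linarith
  have NED: "N\<^sup>2 = E * D"
    unfolding N_def D_def E_def using r2 pw pt by algebra
  define a where "a = N / D"
  have aD: "a * D = N" using Dp by (simp add: a_def)
  have a2: "a\<^sup>2 = E / D" using NED Dp by (simp add: a_def power_divide power2_eq_square)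
  have a1: "\<bar>a\<bar> < 1"
  proof -
    have "a\<^sup>2 < 1" using a2 DEp Dp by (simp add: divide_less_eq)
    then show ?thesis by (simp add: abs_square_less_1)
  qed
  define \<zeta> where "\<zeta> = cis \<omega>"
  have R: "Re \<zeta> = cw" "Im \<zeta> = sw'" by (simp_all add: \<zeta>_def cw_def sw'_def)
  have Rc: "Re (cis \<theta>) = ct" "Im (cis \<theta>) = stt" by (simp_all add: ct_def stt_def)
  have nz1: "\<zeta> + of_real a \<noteq> 0"
  proof -
    have "norm \<zeta> - norm (complex_of_real a) \<le> norm (\<zeta> + complex_of_real a)" by (rule norm_diff_ineq)
    moreover have "norm (complex_of_real a) = \<bar>a\<bar>" "norm \<zeta> = 1" by (simp_all add: \<zeta>_def)
    ultimately have "norm (\<zeta> + complex_of_real a) > 0" using a1 by linarith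
    then show ?thesis by auto
  qed
  have re1: "D * (r * (a * cw + 1) - (ct * (cw + a) - stt * sw')) = 0"
    unfolding N_def D_def using aD[unfolded N_def D_def] r2 pw pt by algebra
  have im1: "D * (r * (a * sw') - (ct * sw' + stt * (cw + a))) = 0"
    unfolding N_def D_def using aD[unfolded N_def D_def] r2 pw pt by algebra
  have re2: "r * (a * cw + 1) = cos \<theta> * (cw + a) - sin \<theta> * sw'"
    using re1 Dp by (simp add: ct_def stt_def)
  have im2: "r * (a * sw') = cos \<theta> * sw' + sin \<theta> * (cw + a)"
    using im1 Dp by (simp add: ct_def stt_def)
  have eq: "complex_of_real r * (of_real a * \<zeta> + 1) = cis \<theta> * (\<zeta> + of_real a)"
  proof (rule complex_eqI)
    show "Re (complex_of_real r * (of_real a * \<zeta> + 1)) = Re (cis \<theta> * (\<zeta> + of_real a))"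
      using re2 by (simp add: R algebra_simps)
    show "Im (complex_of_real r * (of_real a * \<zeta> + 1)) = Im (cis \<theta> * (\<zeta> + of_real a))"
      using im2 by (simp add: R algebra_simps)
  qed
  have val: "complex_of_real r * (of_real a * cis \<omega> + 1) / (cis \<omega> + of_real a) = cis \<theta>"
    using eq nz1 unfolding \<zeta>_def by (simp add: divide_eq_eq)
  have K: "D * (D + E + 2 * N * cw) = D * (2 * sw'\<^sup>2)"
    unfolding N_def D_def E_def using r2 pw pt by algebra
  have K2: "D + E + 2 * N * cw = 2 * sw'\<^sup>2" using K Dp by simp
  have "(a\<^sup>2 - 1) / (1 + a\<^sup>2 + 2 * a * cw) = (N\<^sup>2 - D\<^sup>2) / (D\<^sup>2 + N\<^sup>2 + 2 * N * D * cw)"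
  proof -
    have D2: "D\<^sup>2 \<noteq> 0" using Dp by simp
    have e1: "a\<^sup>2 - 1 = (N\<^sup>2 - D\<^sup>2) / D\<^sup>2" using D2 by (simp add: a_def power_divide diff_divide_distrib)
    have e2: "1 + a\<^sup>2 + 2 * a * cw = (D\<^sup>2 + N\<^sup>2 + 2 * N * D * cw) / D\<^sup>2"
      using D2 Dp by (simp add: a_def power_divide add_divide_distrib power2_eq_square)
    show ?thesis unfolding e1 e2 using D2 by simp
  qed
  also have "\<dots> = (D * (E - D)) / (D * (D + E + 2 * N * cw))"
    unfolding NED by (simp add: algebra_simps power2_eq_square)
  also have "\<dots> = (E - D) / (2 * sw'\<^sup>2)" using Dp K2 by simp
  also have "\<dots> = - \<bar>stt\<bar> / sw'" using DE sw by (simp add: sw'_def power2_eq_square field_simps)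
  also have "\<dots> = - \<bar>sin \<theta> / sin \<omega>\<bar>" using sw by (simp add: stt_def sw'_def abs_divide)
  finally have dv: "(a\<^sup>2 - 1) / (1 + a\<^sup>2 + 2 * a * cos \<omega>) = - \<bar>sin \<theta> / sin \<omega>\<bar>" by (simp add: cw_def)
  have "r = 1 \<or> r = -1" by (simp add: r_def)
  then show ?thesis using a1 val dv by blast
qed

theorem proposition2:
  fixes \<omega>p \<theta>p v :: real
  assumes "0 \<le> \<omega>p" and "\<omega>p \<le> pi"
    and "(0 < \<omega>p \<and> \<omega>p < pi \<and> v = - \<bar>sin \<theta>p / sin \<omega>p\<bar>)
         \<or> ((\<omega>p = 0 \<or> \<omega>p = pi) \<and> (\<exists>k::int. \<theta>p = of_int k * pi) \<and> v = 0)"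
  shows "(\<forall>f\<in>AP_at \<omega>p \<theta>p. phase_deriv f \<omega>p \<le> v)
       \<and> Sup ((\<lambda>f. phase_deriv f \<omega>p) ` AP_at \<omega>p \<theta>p) = v
       \<and> (v = 0 \<longrightarrow> (\<exists>f\<in>{(\<lambda>z. 1), (\<lambda>z. -1)}. f \<in> AP_at \<omega>p \<theta>p \<and> phase_deriv f \<omega>p = v))
       \<and> (v \<noteq> 0 \<longrightarrow> (\<exists>s\<in>{1::complex, -1}. \<exists>a::real. \<bar>a\<bar> < 1 \<and>
             (\<lambda>z. s * (of_real a * z + 1) / (z + of_real a)) \<in> AP_at \<omega>p \<theta>p \<and>
             phase_deriv (\<lambda>z. s * (of_real a * z + 1) / (z + of_real a)) \<omega>p = v))"
proof -
  have bound: "\<forall>f\<in>AP_at \<omega>p \<theta>p. phase_deriv f \<omega>p \<le> v"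
  proof
    fix f assume f: "f \<in> AP_at \<omega>p \<theta>p"
    have b: "phase_deriv f \<omega>p \<le> - (\<bar>sin \<theta>p\<bar> / \<bar>sin \<omega>p\<bar>)" by (rule AP_at_bound[OF f])
    from assms(3) show "phase_deriv f \<omega>p \<le> v"
    proof
      assume "0 < \<omega>p \<and> \<omega>p < pi \<and> v = - \<bar>sin \<theta>p / sin \<omega>p\<bar>"
      then show ?thesis using b by (simp add: abs_divide)
    next
      assume "(\<omega>p = 0 \<or> \<omega>p = pi) \<and> (\<exists>k::int. \<theta>p = of_int k * pi) \<and> v = 0"
      then have "sin \<omega>p = 0" "v = 0" by auto
      then show ?thesis using b by simp
    qed
  qed
  have P0: "v = 0 \<longrightarrow> (\<exists>f\<in>{(\<lambda>z. 1), (\<lambda>z. -1)}. f \<in> AP_at \<omega>p \<theta>p \<and> phase_deriv f \<omega>p = v)"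
  proof
    assume v0: "v = 0"
    have s0: "sin \<theta>p = 0"
      using assms(3)
    proof
      assume h: "0 < \<omega>p \<and> \<omega>p < pi \<and> v = - \<bar>sin \<theta>p / sin \<omega>p\<bar>"
      then have "sin \<omega>p > 0" by (simp add: sin_gt_zero)
      then show ?thesis using h v0 by simp
    next
      assume "(\<omega>p = 0 \<or> \<omega>p = pi) \<and> (\<exists>k::int. \<theta>p = of_int k * pi) \<and> v = 0"
      then show ?thesis using sin_zero_iff_int2 by blast
    qed
    have "(cos \<theta>p)\<^sup>2 = 1" using sin_cos_squared_add[of \<theta>p] s0 by simp
    then have c: "cos \<theta>p = 1 \<or> cos \<theta>p = -1" by (simp add: power2_eq_1_iff)
    have ce: "cis \<theta>p = complex_of_real (cos \<theta>p)" by (simp add: complex_eq_iff s0)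
    from c show "\<exists>f\<in>{(\<lambda>z. 1), (\<lambda>z. -1)}. f \<in> AP_at \<omega>p \<theta>p \<and> phase_deriv f \<omega>p = v"
    proof
      assume c1: "cos \<theta>p = 1"
      have "(\<lambda>z::complex. complex_of_real 1) \<in> AP_at \<omega>p \<theta>p"
        by (rule AP_at_intro[OF const_AP]) (use ce c1 in simp_all)
      moreover have "phase_deriv (\<lambda>z::complex. complex_of_real 1) \<omega>p = 0" by (rule const_deriv) simp
      ultimately show ?thesis using v0 by auto
    next
      assume c1: "cos \<theta>p = -1"
      have "(\<lambda>z::complex. complex_of_real (-1)) \<in> AP_at \<omega>p \<theta>p"
        by (rule AP_at_intro[OF const_AP]) (use ce c1 in simp_all)
      moreover have "phase_deriv (\<lambda>z::complex. complex_of_real (-1)) \<omega>p = 0" by (rule const_deriv) simp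
      ultimately show ?thesis using v0 by auto
    qed
  qed
  have P1: "v \<noteq> 0 \<longrightarrow> (\<exists>s\<in>{1::complex, -1}. \<exists>a::real. \<bar>a\<bar> < 1 \<and>
             (\<lambda>z. s * (of_real a * z + 1) / (z + of_real a)) \<in> AP_at \<omega>p \<theta>p \<and>
             phase_deriv (\<lambda>z. s * (of_real a * z + 1) / (z + of_real a)) \<omega>p = v)"
  proof
    assume vn: "v \<noteq> 0"
    have h: "0 < \<omega>p \<and> \<omega>p < pi \<and> v = - \<bar>sin \<theta>p / sin \<omega>p\<bar>" using assms(3) vn by auto
    then have st: "sin \<theta>p \<noteq> 0" using vn by auto
    obtain r a where r: "r = 1 \<or> r = -1" and a: "\<bar>a\<bar> < 1"
      and val: "complex_of_real r * (of_real a * cis \<omega>p + 1) / (cis \<omega>p + of_real a) = cis \<theta>p"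
      and dv: "(a\<^sup>2 - 1) / (1 + a\<^sup>2 + 2 * a * cos \<omega>p) = - \<bar>sin \<theta>p / sin \<omega>p\<bar>"
      using mob_choice[of \<omega>p \<theta>p] h st by blast
    have r1: "\<bar>r\<bar> = 1" using r by auto
    have m: "(\<lambda>z. complex_of_real r * (of_real a * z + 1) / (z + of_real a)) \<in> AP_at \<omega>p \<theta>p"
      by (rule AP_at_intro[OF mob_AP[OF a r1]]) (use val in simp)
    have d: "phase_deriv (\<lambda>z. complex_of_real r * (of_real a * z + 1) / (z + of_real a)) \<omega>p = v"
      using mob_deriv[OF a r1, of \<omega>p] dv h by simp
    have sr: "complex_of_real r \<in> {1::complex, -1}" using r by auto
    show "\<exists>s\<in>{1::complex, -1}. \<exists>a::real. \<bar>a\<bar> < 1 \<and>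
             (\<lambda>z. s * (of_real a * z + 1) / (z + of_real a)) \<in> AP_at \<omega>p \<theta>p \<and>
             phase_deriv (\<lambda>z. s * (of_real a * z + 1) / (z + of_real a)) \<omega>p = v"
      using sr a m d by blast
  qed
  have wit: "v \<in> (\<lambda>f. phase_deriv f \<omega>p) ` AP_at \<omega>p \<theta>p"
  proof (cases "v = 0")
    case True
    then obtain f where "f \<in> AP_at \<omega>p \<theta>p" "phase_deriv f \<omega>p = v" using P0 by blast
    then show ?thesis by force
  next
    case False
    then obtain s a where "(\<lambda>z. s * (of_real a * z + 1) / (z + of_real a)) \<in> AP_at \<omega>p \<theta>p"
        "phase_deriv (\<lambda>z. s * (of_real a * z + 1) / (z + of_real a)) \<omega>p = v"
      using P1 by blast
    then show ?thesis by force
  qed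
  have "Sup ((\<lambda>f. phase_deriv f \<omega>p) ` AP_at \<omega>p \<theta>p) = v"
    by (rule cSup_eq_maximum[OF wit]) (use bound in auto)
  then show ?thesis using bound P0 P1 by blast
qed

end
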